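(* Let $X$ be an eventually dendric shift space. For every $k\ge1$ there is an $n\ge1$ such that the following holds: whenever $p,w\in\mathcal L(X)$ with $|p|\le k$ and $|w|\ge n$ are such that both $pw$ and $w$ are left-special, there is a letter $b\in A$ which is the unique letter such that $wb$ is left-special and also the unique letter such that $pwb$ is left-special, and moreover $\ell(pwb)=\ell(pw)$ and $\ell(wb)=\ell(w)$.
   Context: $A$ is a finite alphabet; a shift space is a closed shift-invariant subset $X\subseteq A^{\mathbb Z}$; $\mathcal L(X)$ is its set of finite factors, $\mathcal L_{\ge m}(X)$ its words of length $\ge m$. For $w\in\mathcal L(X)$, $\ell(w)=\mathrm{Card}\{a\in A:aw\in\mathcal L(X)\}$, and $w$ is left-special if $\ell(w)\ge2$. The extension graph $\mathcal E_1(w)$ is the undirected bipartite graph with vertex set the disjoint union of $\{a\in A: aw\in\mathcal L(X)\}$ and $\{b\in A: wb\in\mathcal L(X)\}$ and an edge $(a,b)$ iff $awb\in\mathcal L(X)$. $X$ is eventually dendric if for some $m\ge0$, $\mathcal E_1(w)$ is a tree for every $w\in\mathcal L_{\ge m}(X)$. *)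

theory Defs
  imports "HOL-Analysis.Analysis"
begin

text \<open>Alphabet A = UNIV of a finite type 'a. Points of the full shift are maps int => 'a,
  with the product topology of the discrete topology on 'a.\<close>

definition shift :: "(int \<Rightarrow> 'a) \<Rightarrow> (int \<Rightarrow> 'a)" where
  "shift x = (\<lambda>i. x (i + 1))"

definition shift_space :: "(int \<Rightarrow> 'a::finite) set \<Rightarrow> bool" where
  "shift_space X \<longleftrightarrow>
     closedin (product_topology (\<lambda>_::int. discrete_topology (UNIV::'a set)) UNIV) X
     \<and> shift ` X = X"

definition lang :: "(int \<Rightarrow> 'a) set \<Rightarrow> 'a list set" where
  "lang X = {w. \<exists>x\<in>X. \<exists>i::int. w = map (\<lambda>j. x (i + int j)) [0..<length w]}"

definition lval :: "(int \<Rightarrow> 'a) set \<Rightarrow> 'a list \<Rightarrow> nat" where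
  "lval X w = card {a. a # w \<in> lang X}"

definition left_special :: "(int \<Rightarrow> 'a) set \<Rightarrow> 'a list \<Rightarrow> bool" where
  "left_special X w \<longleftrightarrow> w \<in> lang X \<and> lval X w \<ge> 2"

definition ugraph_connected :: "'v set \<Rightarrow> ('v \<Rightarrow> 'v \<Rightarrow> bool) \<Rightarrow> bool" where
  "ugraph_connected V adj \<longleftrightarrow>
     (\<forall>u\<in>V. \<forall>v\<in>V. (u, v) \<in> {(x, y). x \<in> V \<and> y \<in> V \<and> adj x y}\<^sup>*)"

definition ugraph_has_cycle :: "'v set \<Rightarrow> ('v \<Rightarrow> 'v \<Rightarrow> bool) \<Rightarrow> bool" where
  "ugraph_has_cycle V adj \<longleftrightarrow>
     (\<exists>vs. length vs \<ge> 3 \<and> distinct vs \<and> set vs \<subseteq> V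
        \<and> (\<forall>i. Suc i < length vs \<longrightarrow> adj (vs ! i) (vs ! Suc i))
        \<and> adj (last vs) (hd vs))"

definition ugraph_tree :: "'v set \<Rightarrow> ('v \<Rightarrow> 'v \<Rightarrow> bool) \<Rightarrow> bool" where
  "ugraph_tree V adj \<longleftrightarrow> V \<noteq> {} \<and> ugraph_connected V adj \<and> \<not> ugraph_has_cycle V adj"

text \<open>Extension graph E_1(w): left vertices Inl a (aw in L), right vertices Inr b (wb in L),
  edge between Inl a and Inr b iff awb in L.\<close>

definition ext_vertices :: "(int \<Rightarrow> 'a) set \<Rightarrow> 'a list \<Rightarrow> ('a + 'a) set" where
  "ext_vertices X w = Inl ` {a. a # w \<in> lang X} \<union> Inr ` {b. w @ [b] \<in> lang X}"

fun ext_adj :: "(int \<Rightarrow> 'a) set \<Rightarrow> 'a list \<Rightarrow> ('a + 'a) \<Rightarrow> ('a + 'a) \<Rightarrow> bool" where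
  "ext_adj X w (Inl a) (Inr b) = (a # w @ [b] \<in> lang X)"
| "ext_adj X w (Inr b) (Inl a) = (a # w @ [b] \<in> lang X)"
| "ext_adj X w _ _ = False"

definition eventually_dendric :: "(int \<Rightarrow> 'a) set \<Rightarrow> bool" where
  "eventually_dendric X \<longleftrightarrow>
     (\<exists>m::nat. \<forall>w\<in>lang X. length w \<ge> m \<longrightarrow> ugraph_tree (ext_vertices X w) (ext_adj X w))"

end

theory Submission
  imports Defs
begin


lemma walk_join:
  assumes "successively P xs" "successively P ys" "xs \<noteq> []" "ys \<noteq> []" "last xs = hd ys"
  shows "successively P (xs @ tl ys)"
proof -
  obtain y ys' where ys: "ys = y # ys'" using assms(4) by (cases ys) auto
  show ?thesis using assms unfolding ys
    by (auto simp: successively_append_iff successively_Cons)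
qed

lemma walk_take: "successively P xs \<Longrightarrow> successively P (take k xs)"
  by (auto simp: successively_conv_nth)

lemma distinct_walk:
  "successively P xs \<Longrightarrow> xs \<noteq> [] \<Longrightarrow> \<exists>ys. successively P ys \<and> distinct ys \<and> ys \<noteq> []
     \<and> hd ys = hd xs \<and> last ys = last xs \<and> set ys \<subseteq> set xs"
proof (induction "length xs" arbitrary: xs rule: less_induct)
  case less
  show ?case
  proof (cases "distinct xs")
    case True then show ?thesis using less.prems by blast
  next
    case False
    then obtain a z b c where xs: "xs = a @ [z] @ b @ [z] @ c" using not_distinct_decomp by blast
    have s: "successively P (a @ z # c)"
      using less.prems(1) unfolding xs
      by (auto simp: successively_append_iff successively_Cons)
    have "length (a @ z # c) < length xs" unfolding xs by simp
    from less.hyps[OF this s] obtain ys where ys: "successively P ys \<and> distinct ys \<and> ys \<noteq> []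
     \<and> hd ys = hd (a @ z # c) \<and> last ys = last (a @ z # c) \<and> set ys \<subseteq> set (a @ z # c)" by auto
    have "hd (a @ z # c) = hd xs" "last (a @ z # c) = last xs" "set (a @ z # c) \<subseteq> set xs"
      unfolding xs by (auto simp: hd_append)
    then show ?thesis using ys by (intro exI[of _ ys]) auto
  qed
qed

lemma forest_count:
  fixes V :: "('a + 'b) set" and adj
  assumes fin: "finite V" and rV: "r \<in> V"
  and conn: "ugraph_connected V adj" and nc: "\<not> ugraph_has_cycle V adj"
  and sym: "\<And>x y. adj x y \<Longrightarrow> adj y x"
  and inV: "\<And>x y. adj x y \<Longrightarrow> x \<in> V"
  and bip: "\<And>x y. adj x y \<Longrightarrow> isl x \<noteq> isl y"
  shows "card {(b,a). adj (Inl a) (Inr b)} + 1 \<le> card V"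
proof -
  define W where "W v n \<longleftrightarrow> (\<exists>xs. successively adj xs \<and> xs \<noteq> [] \<and> hd xs = r \<and> last xs = v \<and> length xs = Suc n)" for v n
  define d where "d v = (LEAST n. W v n)" for v
  have inV2: "adj x y \<Longrightarrow> y \<in> V" for x y using sym inV by blast
  have stepW: "W y n \<Longrightarrow> adj y z \<Longrightarrow> W z (Suc n)" for y z n
  proof -
    assume "W y n" "adj y z"
    then obtain xs where xs: "successively adj xs" "xs \<noteq> []" "hd xs = r" "last xs = y" "length xs = Suc n"
      unfolding W_def by blast
    have "successively adj (xs @ [z])" using xs \<open>adj y z\<close> by (auto simp: successively_append_iff)
    then show "W z (Suc n)" unfolding W_def using xs by (intro exI[of _ "xs @ [z]"]) auto
  qed
  have reach: "\<exists>n. W v n" if "v \<in> V" for v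
  proof -
    have "(r, v) \<in> {(x, y). x \<in> V \<and> y \<in> V \<and> adj x y}\<^sup>*" using conn rV that unfolding ugraph_connected_def by blast
    then show ?thesis
    proof (induction rule: rtrancl_induct)
      case base
      have "W r 0" unfolding W_def by (intro exI[of _ "[r]"]) auto
      then show ?case by blast
    next
      case (step y z) then show ?case using stepW by blast
    qed
  qed
  have W_d: "v \<in> V \<Longrightarrow> W v (d v)" for v unfolding d_def using reach by (metis LeastI_ex)
  have d_le: "W v n \<Longrightarrow> d v \<le> n" for v n unfolding d_def by (rule Least_le)
  have "W r 0" unfolding W_def by (intro exI[of _ "[r]"]) auto
  hence d_r: "d r = 0" using d_le by fastforce
  have adj_le: "adj u v \<Longrightarrow> d v \<le> Suc (d u)" for u v
    using W_d[OF inV] stepW d_le by blast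
  have parity: "successively adj xs \<Longrightarrow> i < length xs \<Longrightarrow> isl (xs!i) = (isl (xs!0) = even i)" for xs i
  proof (induction i)
    case 0 then show ?case by simp
  next
    case (Suc i)
    have "adj (xs!i) (xs!Suc i)" using Suc.prems successively_nth by blast
    then show ?case using Suc bip by fastforce
  qed
  have W_par: "W v n \<Longrightarrow> isl v = (isl r = even n)" for v n
  proof -
    assume "W v n"
    then obtain xs where xs: "successively adj xs" "xs \<noteq> []" "hd xs = r" "last xs = v" "length xs = Suc n"
      unfolding W_def by blast
    have "last xs = xs ! n" using xs by (simp add: last_conv_nth)
    moreover have "hd xs = xs ! 0" using xs by (simp add: hd_conv_nth)
    ultimately show ?thesis using parity[OF xs(1), of n] xs by simp
  qed
  have adj_ne: "adj u v \<Longrightarrow> d u \<noteq> d v" for u v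
    using W_par[OF W_d[OF inV]] W_par[OF W_d[OF inV2]] bip by metis
  have inV_walk: "set xs \<subseteq> V" if "successively adj xs" "length xs \<ge> 2" for xs
  proof
    fix z assume "z \<in> set xs"
    then obtain i where i: "i < length xs" "z = xs ! i" by (auto simp: in_set_conv_nth)
    show "z \<in> V"
    proof (cases "Suc i < length xs")
      case True then show ?thesis using successively_nth[OF that(1) True] inV i by blast
    next
      case False
      then have "Suc (i - 1) < length xs" "Suc (i - 1) = i" using i that by auto
      then show ?thesis using successively_nth[OF that(1), of "i - 1"] inV2 i by metis
    qed
  qed
  have uniq: "x = y" if xv: "adj x v" and yv: "adj y v" and dx: "d x < d v" and dy: "d y < d v" for x y v
  proof (rule ccontr)
    assume xy: "x \<noteq> y"
    have "d v = Suc (d x)" using adj_le[OF xv] dx by simp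
    moreover have "d v = Suc (d y)" using adj_le[OF yv] dy by simp
    ultimately have e: "d y = d x" by simp
    define e where "e = d x"
    obtain p1 where p1: "successively adj p1" "p1 \<noteq> []" "hd p1 = r" "last p1 = x" "length p1 = Suc e"
      using W_d[OF inV[OF xv]] unfolding W_def e_def by blast
    obtain p2 where p2: "successively adj p2" "p2 \<noteq> []" "hd p2 = r" "last p2 = y" "length p2 = Suc e"
      using W_d[OF inV[OF yv]] unfolding W_def e_def e by blast
    have dve: "d v = Suc e" using \<open>d v = Suc (d x)\<close> e_def by simp
    have notin: "v \<notin> set p" if p: "successively adj p" "p \<noteq> []" "hd p = r" "length p = Suc e" for p
    proof
      assume "v \<in> set p"
      then obtain i where i: "i < length p" "p ! i = v" by (auto simp: in_set_conv_nth)
      have "W v i" unfolding W_def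
        apply (intro exI[of _ "take (Suc i) p"])
        using p i walk_take[OF p(1)] by (auto simp: last_conv_nth hd_conv_nth min_def) (metis le_antisym less_Suc_eq_le)
      then have "d v \<le> i" by (rule d_le)
      then show False using i p dve by linarith
    qed
    have v1: "v \<notin> set p1" using notin p1 by blast
    have v2: "v \<notin> set p2" using notin p2 by blast
    have "e \<noteq> 0"
    proof
      assume "e = 0"
      then have "x = r" "y = r" using p1 p2 by (auto simp: last_conv_nth hd_conv_nth)
      then show False using xy by simp
    qed
    then have tl2: "tl p2 \<noteq> []" using p2 by (cases p2) auto
    define q where "q = rev p1 @ tl p2"
    have r1: "successively adj (rev p1)" using p1(1) by (auto intro: successively_mono sym)
    have qw: "successively adj q" unfolding q_def
      by (rule walk_join[OF r1 p2(1)]) (use p1 p2 in \<open>auto simp: last_rev\<close>)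
    have qh: "hd q = x" unfolding q_def using p1 by (simp add: hd_rev)
    have ql: "last q = y" unfolding q_def using tl2 p2 by (simp add: last_tl)
    have vq: "v \<notin> set q" unfolding q_def using v1 v2 by (metis Un_iff list.set_sel(2) set_append set_rev tl_Nil)
    obtain ys where ys: "successively adj ys" "distinct ys" "ys \<noteq> []" "hd ys = x" "last ys = y" "set ys \<subseteq> set q"
      using distinct_walk[OF qw] qh ql q_def p1(2) by auto
    have ly: "length ys \<ge> 2"
    proof (rule ccontr)
      assume "\<not> length ys \<ge> 2"
      then have "length ys = 1" using ys(3) by (cases ys) (auto simp: Suc_le_eq)
      then have "hd ys = last ys" by (cases ys) auto
      then show False using ys xy by simp
    qed
    define cs where "cs = ys @ [v]"
    have "ugraph_has_cycle V adj"
      unfolding ugraph_has_cycle_def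
    proof (intro exI[of _ cs] conjI)
      show "length cs \<ge> 3" using ly cs_def by simp
      show "distinct cs" using ys vq cs_def by auto
      show "set cs \<subseteq> V" using inV_walk[OF ys(1) ly] inV2[OF xv] cs_def by auto
      have "successively adj cs" unfolding cs_def using ys xv yv
        by (auto simp: successively_append_iff)
      then show "\<forall>i. Suc i < length cs \<longrightarrow> adj (cs ! i) (cs ! Suc i)"
        by (simp add: successively_conv_nth)
      show "adj (last cs) (hd cs)" using cs_def ys sym[OF xv] by simp
    qed
    then show False using nc by simp
  qed
  define E where "E = {(b,a). adj (Inl a) (Inr b)}"
  define f where "f = (\<lambda>(b,a). if d (Inr b) < d (Inl a) then Inl a else (Inr b :: 'a + 'b))"
  have "inj_on f E"
  proof (rule inj_onI)
    fix p q assume p: "p \<in> E" and q: "q \<in> E" and fe: "f p = f q"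
    obtain b a where pb: "p = (b, a)" by (cases p)
    obtain b' a' where qb: "q = (b', a')" by (cases q)
    have e1: "adj (Inl a) (Inr b)" "adj (Inl a') (Inr b')" using p q pb qb E_def by auto
    have n1: "d (Inl a) \<noteq> d (Inr b)" "d (Inl a') \<noteq> d (Inr b')" using adj_ne e1 by auto
    show "p = q"
    proof (cases "d (Inr b) < d (Inl a)")
      case True
      then have fp: "f p = Inl a" using pb f_def by simp
      show ?thesis
      proof (cases "d (Inr b') < d (Inl a')")
        case True2: True
        then have "f q = Inl a'" using qb f_def by simp
        then have "a = a'" using fe fp by simp
        then have e2: "adj (Inr b') (Inl a)" using sym[OF e1(2)] by simp
        have "(Inr b :: 'a + 'b) = Inr b'"
          by (rule uniq[OF sym[OF e1(1)] e2 True]) (use True2 \<open>a = a'\<close> in simp)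
        then show ?thesis using pb qb \<open>a = a'\<close> by simp
      next
        case False
        then have "f q = Inr b'" using qb f_def by simp
        then show ?thesis using fe fp by simp
      qed
    next
      case False
      then have fp: "f p = Inr b" using pb f_def by simp
      have lt: "d (Inl a) < d (Inr b)" using False n1 by simp
      show ?thesis
      proof (cases "d (Inr b') < d (Inl a')")
        case True
        then have "f q = Inl a'" using qb f_def by simp
        then show ?thesis using fe fp by simp
      next
        case False2: False
        then have "f q = Inr b'" using qb f_def by simp
        then have bb: "b = b'" using fe fp by simp
        have lt2: "d (Inl a') < d (Inr b')" using False2 n1 by simp
        have e2: "adj (Inl a') (Inr b)" using e1(2) bb by simp
        have "(Inl a :: 'a + 'b) = Inl a'"
          by (rule uniq[OF e1(1) e2 lt]) (use lt2 bb in simp)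
        then show ?thesis using pb qb bb by simp
      qed
    qed
  qed
  moreover have "f ` E \<subseteq> V - {r}"
  proof
    fix z assume "z \<in> f ` E"
    then obtain b a where ba: "adj (Inl a) (Inr b)" "z = f (b, a)" using E_def by auto
    show "z \<in> V - {r}"
    proof (cases "d (Inr b) < d (Inl a)")
      case True then show ?thesis using ba inV d_r f_def by auto
    next
      case False
      then have "d (Inl a) < d (Inr b)" using adj_ne[OF ba(1)] by simp
      then show ?thesis using False ba inV2 d_r f_def by auto
    qed
  qed
  ultimately have "card E \<le> card (V - {r})" using fin by (intro card_inj_on_le) auto
  moreover have "card (V - {r}) = card V - 1" using rV by (simp add: card_Diff_singleton)
  moreover have "card V > 0" using fin rV card_gt_0_iff by blast
  ultimately show ?thesis unfolding E_def by linarith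
qed



lemma lang_factor:
  assumes "xs @ ys @ zs \<in> lang X" shows "ys \<in> lang X"
proof -
  obtain x i where x: "x \<in> X" "xs @ ys @ zs = map (\<lambda>j. x (i + int j)) [0..<length (xs @ ys @ zs)]"
    using assms unfolding lang_def by blast
  have "ys = map (\<lambda>j. x ((i + int (length xs)) + int j)) [0..<length ys]"
  proof (rule nth_equalityI)
    fix j assume j: "j < length ys"
    have "ys ! j = (xs @ ys @ zs) ! (length xs + j)" using j by (simp add: nth_append)
    also have "\<dots> = x (i + int (length xs + j))" using j by (subst x(2)) simp
    finally show "ys ! j = map (\<lambda>j. x ((i + int (length xs)) + int j)) [0..<length ys] ! j"
      using j by (simp add: add.assoc)
  qed simp
  then show ?thesis unfolding lang_def using x(1)
    by (intro CollectI bexI[of _ x] exI[of _ "i + int (length xs)"])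
qed

lemma lang_left:
  assumes "w \<in> lang X" shows "\<exists>a. a # w \<in> lang X"
proof -
  obtain x i where x: "x \<in> X" "w = map (\<lambda>j. x (i + int j)) [0..<length w]"
    using assms unfolding lang_def by blast
  have "x (i - 1) # w = map (\<lambda>j. x ((i - 1) + int j)) [0..<length (x (i - 1) # w)]"
  proof (rule nth_equalityI)
    fix j assume j: "j < length (x (i - 1) # w)"
    show "(x (i - 1) # w) ! j = map (\<lambda>j. x ((i - 1) + int j)) [0..<length (x (i - 1) # w)] ! j"
    proof (cases j)
      case 0 then show ?thesis by (simp del: upt_Suc)
    next
      case (Suc j')
      then have "j' < length w" using j by simp
      then show ?thesis using Suc by (subst x(2)) (simp del: upt_Suc add: algebra_simps)
    qed
  qed simp
  then have "x (i - 1) # w \<in> lang X" unfolding lang_def using x(1)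
    by (intro CollectI bexI[of _ x] exI[of _ "i-1"])
  then show ?thesis by blast
qed

lemma lang_right:
  assumes "w \<in> lang X" shows "\<exists>b. w @ [b] \<in> lang X"
proof -
  obtain x i where x: "x \<in> X" "w = map (\<lambda>j. x (i + int j)) [0..<length w]"
    using assms unfolding lang_def by blast
  have "w @ [x (i + int (length w))] = map (\<lambda>j. x (i + int j)) [0..<length (w @ [x (i + int (length w))])]"
    by (subst x(2)) simp
  then have "w @ [x (i + int (length w))] \<in> lang X" unfolding lang_def using x(1)
    by (intro CollectI bexI[of _ x] exI[of _ "i"])
  then show ?thesis by blast
qed

lemma lval_pos:
  fixes X :: "(int \<Rightarrow> 'a::finite) set"
  assumes "w \<in> lang X" shows "lval X w \<ge> 1"
proof -
  obtain a where "a # w \<in> lang X" using lang_left assms by blast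
  then have "{a. a # w \<in> lang X} \<noteq> {}" by blast
  then show ?thesis unfolding lval_def by (simp add: Suc_le_eq card_gt_0_iff)
qed

lemma lval_snoc:
  fixes X :: "(int \<Rightarrow> 'a::finite) set"
  shows "lval X (w @ [b]) \<le> lval X w"
proof -
  have "{a. a # w @ [b] \<in> lang X} \<subseteq> {a. a # w \<in> lang X}"
    using lang_factor[of "[]" "_ # w" "[b]"] by auto
  then show ?thesis unfolding lval_def by (intro card_mono) auto
qed

lemma ls_snoc:
  fixes X :: "(int \<Rightarrow> 'a::finite) set"
  shows "left_special X (w @ [b]) \<Longrightarrow> left_special X w"
  unfolding left_special_def using lval_snoc[of X w b] lang_factor[of "[]" w "[b]"] by auto

lemma ext_adj_cases:
  "ext_adj X w x y \<Longrightarrow> (\<exists>a b. x = Inl a \<and> y = Inr b \<and> a # w @ [b] \<in> lang X)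
     \<or> (\<exists>a b. x = Inr b \<and> y = Inl a \<and> a # w @ [b] \<in> lang X)"
  by (cases x; cases y) auto

lemma tree_ineq:
  fixes X :: "(int \<Rightarrow> 'a::finite) set"
  assumes tree: "ugraph_tree (ext_vertices X w) (ext_adj X w)"
  shows "(\<Sum>b\<in>{b. w @ [b] \<in> lang X}. lval X (w @ [b])) + 1 \<le> lval X w + card {b. w @ [b] \<in> lang X}"
proof -
  let ?V = "ext_vertices X w" and ?adj = "ext_adj X w"
  let ?R = "{b. w @ [b] \<in> lang X}" and ?Lw = "{a. a # w \<in> lang X}"
  obtain r where r: "r \<in> ?V" using tree unfolding ugraph_tree_def by blast
  have in1: "a # w \<in> lang X" "w @ [b] \<in> lang X" if "a # w @ [b] \<in> lang X" for a b
    using lang_factor[of "[]" "a # w" "[b]"] lang_factor[of "[a]" "w @ [b]" "[]"] that by auto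
  have sym: "?adj x y \<Longrightarrow> ?adj y x" for x y using ext_adj_cases[of X w x y] by auto
  have inV: "?adj x y \<Longrightarrow> x \<in> ?V" for x y
    using ext_adj_cases[of X w x y] in1 unfolding ext_vertices_def by auto
  have bip: "?adj x y \<Longrightarrow> isl x \<noteq> isl y" for x y using ext_adj_cases[of X w x y] by auto
  have fc: "card {(b,a). ?adj (Inl a) (Inr b)} + 1 \<le> card ?V"
    by (rule forest_count[OF _ r _ _ sym inV bip]) (use tree in \<open>auto simp: ugraph_tree_def\<close>)
  have "{(b,a). ?adj (Inl a) (Inr b)} = (SIGMA b:?R. {a. a # w @ [b] \<in> lang X})"
    using in1 by auto
  then have cE: "card {(b,a). ?adj (Inl a) (Inr b)} = (\<Sum>b\<in>?R. lval X (w @ [b]))"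
    unfolding lval_def by simp
  have "card ?V = card (Inl ` ?Lw :: ('a + 'a) set) + card (Inr ` ?R :: ('a + 'a) set)"
    unfolding ext_vertices_def by (rule card_Un_disjoint) auto
  also have "\<dots> = lval X w + card ?R" unfolding lval_def by (simp add: card_image)
  finally show ?thesis using fc cE by simp
qed



lemma regime:
  fixes X :: "(int \<Rightarrow> 'a::finite) set"
  assumes "eventually_dendric X"
  shows "\<exists>N. \<forall>w. length w \<ge> N \<and> left_special X w \<longrightarrow> (\<exists>b. left_special X (w @ [b])
      \<and> (\<forall>c. left_special X (w @ [c]) \<longrightarrow> c = b) \<and> lval X (w @ [b]) = lval X w)"
proof -
  obtain m where m: "\<And>w. w \<in> lang X \<Longrightarrow> length w \<ge> m \<Longrightarrow> ugraph_tree (ext_vertices X w) (ext_adj X w)"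
    using assms unfolding eventually_dendric_def by blast
  define R where "R w = {b. w @ [b] \<in> lang X}" for w
  define Ln where "Ln n = {w \<in> lang X. length w = n}" for n
  define S where "S n = (\<Sum>w\<in>Ln n. lval X w - 1)" for n
  define LS where "LS n = {w \<in> Ln n. lval X w \<ge> 2}" for n
  define c where "c n = card (LS n)" for n
  have finR: "finite (R w)" for w by simp
  have finLn: "finite (Ln n)" for n
  proof -
    have "Ln n \<subseteq> {xs. set xs \<subseteq> UNIV \<and> length xs = n}" unfolding Ln_def by auto
    then show ?thesis using finite_lists_length_eq[of "UNIV :: 'a set" n] finite_subset by auto
  qed
  have finLS: "finite (LS n)" for n using finLn unfolding LS_def by simp
  have wordineq: "(\<Sum>b\<in>R w. lval X (w @ [b]) - 1) \<le> lval X w - 1" if "w \<in> lang X" "length w \<ge> m" for w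
  proof -
    have t: "(\<Sum>b\<in>R w. lval X (w @ [b])) + 1 \<le> lval X w + card (R w)"
      using tree_ineq[OF m[OF that]] unfolding R_def by simp
    have "(\<Sum>b\<in>R w. lval X (w @ [b])) = (\<Sum>b\<in>R w. (lval X (w @ [b]) - 1) + 1)"
    proof (intro sum.cong refl)
      fix b assume "b \<in> R w"
      then have "lval X (w @ [b]) \<ge> 1" using lval_pos unfolding R_def by auto
      then show "lval X (w @ [b]) = lval X (w @ [b]) - 1 + 1" by simp
    qed
    also have "\<dots> = (\<Sum>b\<in>R w. lval X (w @ [b]) - 1) + card (R w)"
      by (simp only: sum.distrib) simp
    finally show ?thesis using t lval_pos[OF that(1)] by linarith
  qed
  have LnSuc: "Ln (Suc n) = (\<lambda>(w, b). w @ [b]) ` (SIGMA w:Ln n. R w)" for n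
  proof
    show "Ln (Suc n) \<subseteq> (\<lambda>(w, b). w @ [b]) ` (SIGMA w:Ln n. R w)"
    proof
      fix u assume u: "u \<in> Ln (Suc n)"
      then have ne: "u \<noteq> []" unfolding Ln_def by auto
      have ub: "u = butlast u @ [last u]" using ne by simp
      have "butlast u \<in> lang X" using lang_factor[of "[]" "butlast u" "[last u]"] u ub unfolding Ln_def by auto
      then show "u \<in> (\<lambda>(w, b). w @ [b]) ` (SIGMA w:Ln n. R w)"
        using u ub unfolding Ln_def R_def by (intro image_eqI[of _ _ "(butlast u, last u)"]) auto
    qed
    show "(\<lambda>(w, b). w @ [b]) ` (SIGMA w:Ln n. R w) \<subseteq> Ln (Suc n)" unfolding Ln_def R_def by auto
  qed
  have Ssuc: "S (Suc n) = (\<Sum>w\<in>Ln n. \<Sum>b\<in>R w. lval X (w @ [b]) - 1)" for n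
  proof -
    have inj: "inj_on (\<lambda>(w, b). w @ [b]) (SIGMA w:Ln n. R w)" by (auto simp: inj_on_def)
    have "S (Suc n) = (\<Sum>p\<in>(SIGMA w:Ln n. R w). lval X (fst p @ [snd p]) - 1)"
      unfolding S_def LnSuc by (subst sum.reindex[OF inj]) (simp add: case_prod_beta)
    also have "\<dots> = (\<Sum>w\<in>Ln n. \<Sum>b\<in>R w. lval X (w @ [b]) - 1)"
      by (subst sum.Sigma[OF finLn]) (auto simp: case_prod_beta)
    finally show ?thesis .
  qed
  have Sdec: "S (Suc n) \<le> S n" if "n \<ge> m" for n
    unfolding Ssuc unfolding S_def by (rule sum_mono) (use wordineq that in \<open>auto simp: Ln_def\<close>)
  obtain N1 where N1: "N1 \<ge> m" "\<And>n. n \<ge> m \<Longrightarrow> S N1 \<le> S n"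
    using ex_has_least_nat[of "\<lambda>n. n \<ge> m" m S] by auto
  have Sle: "S n \<le> S N1" if "n \<ge> N1" for n
    using that
  proof (induction rule: dec_induct)
    case base then show ?case by simp
  next
    case (step n) then show ?case using Sdec[of n] N1 by simp
  qed
  have Seq: "S n = S N1" if "n \<ge> N1" for n using Sle[OF that] N1(2)[of n] N1(1) that by simp
  have wordeq: "(\<Sum>b\<in>R w. lval X (w @ [b]) - 1) = lval X w - 1" if "w \<in> Ln n" "n \<ge> N1" for w n
  proof (rule ccontr)
    assume ne: "\<not> ?thesis"
    have "S (Suc n) < S n" unfolding Ssuc unfolding S_def
    proof (rule sum_strict_mono_ex1[OF finLn])
      show "\<forall>x\<in>Ln n. (\<Sum>b\<in>R x. lval X (x @ [b]) - 1) \<le> lval X x - 1"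
        using wordineq that N1 unfolding Ln_def by auto
      show "\<exists>a\<in>Ln n. (\<Sum>b\<in>R a. lval X (a @ [b]) - 1) < lval X a - 1"
        using wordineq[of w] that N1 ne unfolding Ln_def by (intro bexI[of _ w]) auto
    qed
    then show False using Seq[of n] Seq[of "Suc n"] that by simp
  qed
  have child: "\<exists>b. w @ [b] \<in> LS (Suc n)" if "w \<in> LS n" "n \<ge> N1" for w n
  proof (rule ccontr)
    assume "\<not> ?thesis"
    then have z: "\<forall>b\<in>R w. lval X (w @ [b]) - 1 = 0" unfolding LS_def Ln_def R_def using that unfolding LS_def Ln_def
      by auto
    have "(\<Sum>b\<in>R w. lval X (w @ [b]) - 1) = 0" using z by simp
    then show False using wordeq[of w n] that unfolding LS_def by simp
  qed
  have bl_sub: "butlast ` LS (Suc n) \<subseteq> LS n" for n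
  proof
    fix v assume "v \<in> butlast ` LS (Suc n)"
    then obtain u where u: "u \<in> LS (Suc n)" "v = butlast u" by blast
    then have ne: "u \<noteq> []" unfolding LS_def Ln_def by auto
    have ub: "u = butlast u @ [last u]" using ne by simp
    have "left_special X u" using u unfolding LS_def Ln_def left_special_def by auto
    then have "left_special X (butlast u)" using ls_snoc ub by metis
    then show "v \<in> LS n" using u unfolding LS_def Ln_def left_special_def by auto
  qed
  have bl_eq: "butlast ` LS (Suc n) = LS n" if n1: "n \<ge> N1" for n
  proof
    show "LS n \<subseteq> butlast ` LS (Suc n)"
    proof
      fix w assume "w \<in> LS n"
      then obtain b where "w @ [b] \<in> LS (Suc n)" using child n1 by blast
      then show "w \<in> butlast ` LS (Suc n)" by (intro image_eqI[of _ _ "w @ [b]"]) auto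
    qed
  qed (rule bl_sub)
  have cinc: "c n \<le> c (Suc n)" if "n \<ge> N1" for n
    unfolding c_def using bl_eq[OF that] card_image_le[OF finLS, of butlast "Suc n"] by simp
  have cS: "c n \<le> S n" for n
  proof -
    have "c n = (\<Sum>w\<in>LS n. 1)" unfolding c_def by simp
    also have "\<dots> \<le> (\<Sum>w\<in>LS n. lval X w - 1)" by (rule sum_mono) (auto simp: LS_def)
    also have "\<dots> \<le> S n" unfolding S_def
      by (rule sum_mono2[OF finLn]) (auto simp: LS_def)
    finally show ?thesis .
  qed
  obtain N2 where N2: "N2 \<ge> N1" "\<And>n. n \<ge> N1 \<Longrightarrow> c n \<le> c N2"
  proof -
    have bound: "\<forall>y. N1 \<le> y \<longrightarrow> c y < Suc (S N1)"
    proof (intro allI impI)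
      fix y assume "N1 \<le> y" then have "c y \<le> S N1" using cS[of y] Seq[of y] by simp
      then show "c y < Suc (S N1)" by simp
    qed
    have "\<exists>x. N1 \<le> x \<and> (\<forall>y. N1 \<le> y \<longrightarrow> c y \<le> c x)"
      by (rule ex_has_greatest_nat[of "\<lambda>n. n \<ge> N1" N1 c "Suc (S N1)"]) (use bound in auto)
    then show ?thesis using that by blast
  qed
  have cge: "c N2 \<le> c n" if "n \<ge> N2" for n
    using that
  proof (induction rule: dec_induct)
    case base then show ?case by simp
  next
    case (step n) then show ?case using cinc[of n] N2 by simp
  qed
  have ceq: "c (Suc n) = c n" if "n \<ge> N2" for n
  proof -
    have "c N2 \<le> c n" using cge that by simp
    moreover have "c (Suc n) \<le> c N2" using N2 that by simp
    moreover have "c n \<le> c (Suc n)" using cinc N2 that by simp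
    ultimately show ?thesis by linarith
  qed
  show ?thesis
  proof (intro exI[of _ N2] allI impI)
    fix w assume a: "N2 \<le> length w \<and> left_special X w"
    define n where "n = length w"
    have n: "n \<ge> N2" "n \<ge> N1" using a N2 n_def by auto
    have wLS: "w \<in> LS n" using a unfolding LS_def Ln_def left_special_def n_def by auto
    obtain b where b: "w @ [b] \<in> LS (Suc n)" using child[OF wLS n(2)] by blast
    have inj: "inj_on butlast (LS (Suc n))"
      by (rule eq_card_imp_inj_on[OF finLS]) (use bl_eq[OF n(2)] ceq[OF n(1)] in \<open>simp add: c_def\<close>)
    have lsiff: "left_special X (w @ [c']) \<longleftrightarrow> w @ [c'] \<in> LS (Suc n)" for c'
      unfolding LS_def Ln_def left_special_def n_def by auto
    have uniq: "c' = b" if "left_special X (w @ [c'])" for c'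
    proof -
      have "w @ [c'] \<in> LS (Suc n)" using that lsiff by blast
      moreover have "butlast (w @ [c']) = butlast (w @ [b])" by simp
      ultimately have "w @ [c'] = w @ [b]" using inj b by (meson inj_onD)
      then show ?thesis by simp
    qed
    have bR: "b \<in> R w" using b unfolding LS_def Ln_def R_def by auto
    have zero: "lval X (w @ [c']) - 1 = 0" if "c' \<in> R w - {b}" for c'
    proof -
      have "\<not> left_special X (w @ [c'])" using uniq that by blast
      then show ?thesis using that unfolding left_special_def R_def by auto
    qed
    have "lval X w - 1 = (\<Sum>c'\<in>R w. lval X (w @ [c']) - 1)" using wordeq[of w n] wLS n unfolding LS_def by simp
    also have "\<dots> = (lval X (w @ [b]) - 1) + (\<Sum>c'\<in>R w - {b}. lval X (w @ [c']) - 1)"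
      by (rule sum.remove[OF finR bR])
    also have "\<dots> = lval X (w @ [b]) - 1" using zero by simp
    finally have "lval X w - 1 = lval X (w @ [b]) - 1" .
    moreover have "lval X (w @ [b]) \<ge> 1" "lval X w \<ge> 1" using b wLS unfolding LS_def by auto
    ultimately have "lval X (w @ [b]) = lval X w" by simp
    then show "\<exists>b. left_special X (w @ [b]) \<and> (\<forall>c. left_special X (w @ [c]) \<longrightarrow> c = b) \<and> lval X (w @ [b]) = lval X w"
      using b lsiff uniq by blast
  qed
qed



theorem mainTheorem7:
  fixes X :: "(int \<Rightarrow> 'a::finite) set"
  assumes "shift_space X" and "eventually_dendric X"
  shows "\<forall>k::nat. k \<ge> 1 \<longrightarrow> (\<exists>n::nat. n \<ge> 1 \<and>
           (\<forall>p w. p \<in> lang X \<and> w \<in> lang X \<and> length p \<le> k \<and> length w \<ge> n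
              \<and> left_special X (p @ w) \<and> left_special X w \<longrightarrow>
              (\<exists>b. (\<forall>c. left_special X (w @ [c]) \<longleftrightarrow> c = b)
                 \<and> (\<forall>c. left_special X (p @ w @ [c]) \<longleftrightarrow> c = b)
                 \<and> lval X (p @ w @ [b]) = lval X (p @ w)
                 \<and> lval X (w @ [b]) = lval X w)))"
proof (intro allI impI)
  fix k :: nat assume "k \<ge> 1"
  obtain N where UC: "\<And>w. length w \<ge> N \<Longrightarrow> left_special X w \<Longrightarrow> (\<exists>b. left_special X (w @ [b])
      \<and> (\<forall>c. left_special X (w @ [c]) \<longrightarrow> c = b) \<and> lval X (w @ [b]) = lval X w)"
    using regime[OF assms(2)] by blast
  have takeinj: "u = u'" if "n \<ge> N" "length u = n" "length u' = n" "left_special X u"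
    "left_special X u'" "take N u = take N u'" for n u u'
    using that
  proof (induction n arbitrary: u u')
    case 0 then show ?case by simp
  next
    case (Suc n)
    show ?case
    proof (cases "Suc n = N")
      case True then show ?thesis using Suc.prems by simp
    next
      case False
      then have nN: "n \<ge> N" using Suc.prems by simp
      have ne: "u \<noteq> []" "u' \<noteq> []" using Suc.prems by auto
      have ls: "left_special X (butlast u)" "left_special X (butlast u')"
        using ls_snoc[of X "butlast u" "last u"] ls_snoc[of X "butlast u'" "last u'"] Suc.prems ne by simp_all
      have "take N (butlast u) = take N u" "take N (butlast u') = take N u'"
        using Suc.prems nN by (simp_all add: take_butlast)
      then have bb: "butlast u = butlast u'"
        using Suc.IH[OF nN _ _ ls] Suc.prems by simp
      obtain b where b: "left_special X (butlast u @ [b])" "\<forall>c. left_special X (butlast u @ [c]) \<longrightarrow> c = b"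
        using UC[OF _ ls(1)] nN Suc.prems by auto
      have "last u = b" using b(2) Suc.prems ne by simp
      moreover have "left_special X (butlast u @ [last u'])" using bb Suc.prems ne by simp
      then have "last u' = b" using b(2) by blast
      ultimately show ?thesis using bb ne by (metis append_butlast_last_id)
    qed
  qed
  define P where "P n = {(s, take N u, take N v) | s u v. s \<le> k \<and> left_special X u \<and> left_special X v
      \<and> length v = n \<and> length u = n + s \<and> drop s u = v}" for n
  have finP: "finite (P n)" for n
  proof -
    let ?T = "{xs :: 'a list. set xs \<subseteq> UNIV \<and> length xs \<le> N}"
    have "P n \<subseteq> {..k} \<times> ?T \<times> ?T"
    proof
      fix t assume "t \<in> P n"
      then obtain s u v where "t = (s, take N u, take N v)" "s \<le> k" unfolding P_def by blast
      then show "t \<in> {..k} \<times> ?T \<times> ?T" by simp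
    qed
    moreover have "finite ({..k} \<times> ?T \<times> ?T)"
      by (intro finite_cartesian_product finite_lists_length_le) simp_all
    ultimately show ?thesis by (rule finite_subset)
  qed
  have Pmono: "P (Suc n) \<subseteq> P n" if "n \<ge> N" for n
  proof
    fix t assume "t \<in> P (Suc n)"
    then obtain s u v where t: "t = (s, take N u, take N v)" "s \<le> k" "left_special X u" "left_special X v"
      "length v = Suc n" "length u = Suc n + s" "drop s u = v" unfolding P_def by blast
    have ne: "u \<noteq> []" "v \<noteq> []" using t by auto
    have ls: "left_special X (butlast u)" "left_special X (butlast v)"
      using ls_snoc[of X "butlast u" "last u"] ls_snoc[of X "butlast v" "last v"] t ne by simp_all
    have tk: "take N (butlast u) = take N u" "take N (butlast v) = take N v"
      using t that by (simp_all add: take_butlast)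
    have "drop s (butlast u) = butlast v" using t by (simp add: drop_butlast)
    then show "t \<in> P n" unfolding P_def using t ls tk
      by (intro CollectI exI[of _ s] exI[of _ "butlast u"] exI[of _ "butlast v"]) auto
  qed
  obtain N3 where N3: "N3 \<ge> N" "\<And>n. n \<ge> N \<Longrightarrow> card (P N3) \<le> card (P n)"
    using ex_has_least_nat[of "\<lambda>n. n \<ge> N" N "\<lambda>n. card (P n)"] by auto
  have Psub: "P n \<subseteq> P N3" if "n \<ge> N3" for n
    using that
  proof (induction rule: dec_induct)
    case base then show ?case by simp
  next
    case (step n) then show ?case using Pmono[of n] N3 by auto
  qed
  have Peq: "P n = P N3" if "n \<ge> N3" for n
  proof -
    have "card (P n) \<le> card (P N3)" using card_mono[OF finP Psub[OF that]] .
    moreover have "card (P N3) \<le> card (P n)" using N3 that by simp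
    ultimately show ?thesis using card_subset_eq[OF finP Psub[OF that]] by simp
  qed
  show "\<exists>n::nat. n \<ge> 1 \<and>
           (\<forall>p w. p \<in> lang X \<and> w \<in> lang X \<and> length p \<le> k \<and> length w \<ge> n
              \<and> left_special X (p @ w) \<and> left_special X w \<longrightarrow>
              (\<exists>b. (\<forall>c. left_special X (w @ [c]) \<longleftrightarrow> c = b)
                 \<and> (\<forall>c. left_special X (p @ w @ [c]) \<longleftrightarrow> c = b)
                 \<and> lval X (p @ w @ [b]) = lval X (p @ w)
                 \<and> lval X (w @ [b]) = lval X w))"
  proof (intro exI[of _ "Suc N3"] conjI allI impI)
    fix p w assume a: "p \<in> lang X \<and> w \<in> lang X \<and> length p \<le> k \<and> Suc N3 \<le> length w
              \<and> left_special X (p @ w) \<and> left_special X w"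
    define s where "s = length p"
    define l where "l = length w"
    have l: "l \<ge> N3" "l \<ge> N" using a N3 l_def by auto
    have "(s, take N (p @ w), take N w) \<in> P l" unfolding P_def mem_Collect_eq
    proof (intro exI conjI)
      show "(s, take N (p @ w), take N w) = (s, take N (p @ w), take N w)" by (rule refl)
      show "s \<le> k" using a s_def by simp
      show "left_special X (p @ w)" "left_special X w" using a by simp_all
      show "length w = l" using l_def by simp
      show "length (p @ w) = l + s" using l_def s_def by simp
      show "drop s (p @ w) = w" using s_def by simp
    qed
    then have "(s, take N (p @ w), take N w) \<in> P (Suc l)"
    proof -
      have e1: "P l = P N3" by (rule Peq) (use l(1) in simp)
      have e2: "P (Suc l) = P N3" by (rule Peq) (use l(1) in simp)
      note e1 e2
      then show ?thesis using \<open>(s, take N (p @ w), take N w) \<in> P l\<close> by simp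
    qed
    then have "\<exists>s' u' v'. (s, take N (p @ w), take N w) = (s', take N u', take N v') \<and> s' \<le> k
      \<and> left_special X u' \<and> left_special X v' \<and> length v' = Suc l
      \<and> length u' = Suc l + s' \<and> drop s' u' = v'"
      unfolding P_def by (simp only: mem_Collect_eq)
    then obtain s' u' v' where uv1: "(s, take N (p @ w), take N w) = (s', take N u', take N v') \<and> s' \<le> k
      \<and> left_special X u' \<and> left_special X v' \<and> length v' = Suc l
      \<and> length u' = Suc l + s' \<and> drop s' u' = v'" by (elim exE)
    have uv0: "(s, take N (p @ w), take N w) = (s', take N u', take N v')"
      "s' \<le> k" "left_special X u'" "left_special X v'" "length v' = Suc l"
      "length u' = Suc l + s'" "drop s' u' = v'" using uv1 by simp_all
    have ss: "s' = s" using uv0(1) by simp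
    have uv: "left_special X u'" "left_special X v'" "length v' = Suc l"
      "length u' = Suc l + s" "drop s u' = v'" "take N u' = take N (p @ w)" "take N v' = take N w"
      using uv0 unfolding ss by simp_all
    have ne: "u' \<noteq> []" "v' \<noteq> []" using uv by auto
    have ub: "u' = butlast u' @ [last u']" "v' = butlast v' @ [last v']" using ne by simp_all
    have ls: "left_special X (butlast u')" "left_special X (butlast v')"
      using ls_snoc[of X "butlast u'" "last u'"] ls_snoc[of X "butlast v'" "last v'"] uv ne by simp_all
    have bpw: "butlast u' = p @ w"
      by (rule takeinj[of "l + s"]) (use l uv ls a s_def l_def in \<open>simp_all add: take_butlast\<close>)
    have bw: "butlast v' = w"
      by (rule takeinj[of l]) (use l uv ls a s_def l_def in \<open>simp_all add: take_butlast\<close>)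
    define x where "x = last u'"
    define b where "b = last v'"
    have u'eq: "u' = p @ w @ [x]" using ub(1) unfolding bpw x_def append_assoc .
    have v'eq: "v' = w @ [b]" using ub(2) unfolding bw b_def .
    have "w @ [x] = w @ [b]" using uv(5) s_def unfolding u'eq v'eq by simp
    then have xb: "x = b" by simp
    have lsw: "left_special X (w @ [b])" using uv(2) unfolding v'eq .
    have lspw: "left_special X (p @ w @ [b])" using uv(1) unfolding u'eq xb .
    have lw: "length w \<ge> N" using l l_def by simp
    have lpw: "length (p @ w) \<ge> N" using l l_def by simp
    have lsa: "left_special X w" "left_special X (p @ w)" using a by simp_all
    obtain b1 where b1: "left_special X (w @ [b1])" "\<forall>c. left_special X (w @ [c]) \<longrightarrow> c = b1"
      "lval X (w @ [b1]) = lval X w" using UC[OF lw lsa(1)] by (elim exE conjE) (rule that)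
    obtain b2 where b2: "left_special X (p @ w @ [b2])" "\<forall>c. left_special X (p @ w @ [c]) \<longrightarrow> c = b2"
      "lval X (p @ w @ [b2]) = lval X (p @ w)" using UC[OF lpw lsa(2)] unfolding append_assoc by (elim exE conjE) (rule that)
    have e1: "b = b1" using b1(2)[rule_format, OF lsw] .
    have e2: "b = b2" using b2(2)[rule_format, OF lspw] .
    have i1: "\<forall>c. left_special X (w @ [c]) \<longleftrightarrow> c = b"
    proof (intro allI iffI)
      fix c assume "left_special X (w @ [c])"
      then have "c = b1" by (rule b1(2)[rule_format])
      then show "c = b" using e1 by simp
    next
      fix c assume "c = b" then show "left_special X (w @ [c])" using lsw by simp
    qed
    have i2: "\<forall>c. left_special X (p @ w @ [c]) \<longleftrightarrow> c = b"
    proof (intro allI iffI)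
      fix c assume "left_special X (p @ w @ [c])"
      then have "c = b2" by (rule b2(2)[rule_format])
      then show "c = b" using e2 by simp
    next
      fix c assume "c = b" then show "left_special X (p @ w @ [c])" using lspw by simp
    qed
    show "\<exists>b. (\<forall>c. left_special X (w @ [c]) \<longleftrightarrow> c = b)
                 \<and> (\<forall>c. left_special X (p @ w @ [c]) \<longleftrightarrow> c = b)
                 \<and> lval X (p @ w @ [b]) = lval X (p @ w)
                 \<and> lval X (w @ [b]) = lval X w"
      using i1 i2 b1(3) b2(3) unfolding e1[symmetric] e2[symmetric] by (intro exI[of _ b] conjI)
  qed simp
qed

end
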